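(* Let $M=p_1^{n_1}\cdots p_K^{n_K}$ with distinct primes and $n_\nu\in\mathbb{N}$, and let $A\oplus B=\mathbb{Z}_M$. Fix distinct $i,j\in\{1,\dots,K\}$, let $z\in\mathbb{Z}_M$, and let $\Lambda=\Lambda(z,M/(p_ip_j))$. Let $a\in A$, $b\in B$ satisfy $a+b=z$. Then there exists $\nu\in\{i,j\}$ such that $\Sigma_A(\Lambda)\subset A\cap\Pi(a,p_\nu^{n_\nu-1})$ and $\Sigma_B(\Lambda)\subset B\cap\Pi(b,p_\nu^{n_\nu-1})$.
   Context: $A\oplus B=\mathbb{Z}_M$ means every element of $\mathbb{Z}_M$ is uniquely $a+b$ with $a\in A$, $b\in B$. For $d\mid M$, $\Lambda(x,d)=\{x'\in\mathbb{Z}_M: d\mid x-x'\}$, and $\Pi(x,p^\alpha)=\Lambda(x,p^\alpha)$. For $Z\subset\mathbb{Z}_M$, $\Sigma_A(Z)=\{a\in A:a+b\in Z\text{ for some }b\in B\}$, $\Sigma_B(Z)=\{b\in B:a+b\in Z\text{ for some }a\in A\}$. *)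

theory Defs
  imports "HOL-Number_Theory.Number_Theory"
begin

text \<open>Z_M is modelled as the residues {0..<M} with addition modulo M.\<close>

definition ZM :: "nat \<Rightarrow> nat set" where
  "ZM M = {0..<M}"

definition tiling :: "nat \<Rightarrow> nat set \<Rightarrow> nat set \<Rightarrow> bool" where
  "tiling M A B \<longleftrightarrow> A \<subseteq> ZM M \<and> B \<subseteq> ZM M \<and>
     (\<forall>x\<in>ZM M. \<exists>!ab. fst ab \<in> A \<and> snd ab \<in> B \<and> (fst ab + snd ab) mod M = x)"

text \<open>\<Lambda>(x,d) = {x' \<in> Z_M : d | x - x'}; \<Pi>(x,p^\<alpha>) = \<Lambda>(x,p^\<alpha>).\<close>
definition Lam :: "nat \<Rightarrow> nat \<Rightarrow> nat \<Rightarrow> nat set" where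
  "Lam M x d = {x' \<in> ZM M. [x = x'] (mod d)}"

definition SigmaA :: "nat \<Rightarrow> nat set \<Rightarrow> nat set \<Rightarrow> nat set \<Rightarrow> nat set" where
  "SigmaA M A B Z = {a \<in> A. \<exists>b\<in>B. (a + b) mod M \<in> Z}"

definition SigmaB :: "nat \<Rightarrow> nat set \<Rightarrow> nat set \<Rightarrow> nat set \<Rightarrow> nat set" where
  "SigmaB M A B Z = {b \<in> B. \<exists>a\<in>A. (a + b) mod M \<in> Z}"

end

theory Submission
  imports Defs
begin


lemma sum_list_rotate1: "sum_list (rotate1 xs) = sum_list (xs::nat list)"
  by (cases xs) auto

lemma sum_list_rotate: "sum_list (rotate k xs) = sum_list (xs::nat list)"
  by (induction k) (auto simp: sum_list_rotate1)

lemma rotate_fix_const: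
  assumes p: "prime p" and len: "length xs = p" and k: "0 < k" "k < p"
    and rfix: "rotate k xs = xs"
  shows "xs = replicate p (xs ! 0)"
proof -
  have p0: "p > 0" using p prime_gt_0_nat by blast
  have step: "xs ! ((n + k) mod p) = xs ! n" if "n < p" for n
    using nth_rotate[of n xs k] that len rfix by (simp add: add.commute)
  have gen: "xs ! ((n + m * k) mod p) = xs ! n" if "n < p" for n m
  proof (induction m)
    case 0 then show ?case using that by simp
  next
    case (Suc m)
    have "(n + Suc m * k) mod p = ((n + m * k) + k) mod p"
      by (simp add: algebra_simps)
    also have "\<dots> = ((n + m * k) mod p + k) mod p"
      by (simp add: mod_add_left_eq)
    finally have e: "(n + Suc m * k) mod p = ((n + m * k) mod p + k) mod p" .
    have "xs ! (((n + m * k) mod p + k) mod p) = xs ! ((n + m * k) mod p)"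
      using step[of "(n + m * k) mod p"] p0 by simp
    then show ?case using e Suc by simp
  qed
  have cop: "coprime k p"
  proof -
    have "\<not> p dvd k" using k nat_dvd_not_less by blast
    then have "coprime p k" using p prime_imp_coprime_nat by blast
    then show ?thesis by (rule coprime_commute[THEN iffD1])
  qed
  obtain k0 where "[k * k0 = Suc 0] (mod p)" using cong_solve_coprime_nat[OF cop] by blast
  then have k': "[k * k0 = 1] (mod p)" by (simp only: One_nat_def)
  have all: "xs ! i = xs ! 0" if "i < p" for i
  proof -
    have "(0 + (i * k0) * k) mod p = i mod p"
    proof -
      have "[i * k0 * k = i * 1] (mod p)"
        using cong_scalar_left[OF k', of i] by (simp add: ac_simps)
      then show ?thesis by (simp add: cong_def)
    qed
    then show ?thesis using gen[of 0 "i * k0"] that p0 by simp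
  qed
  show ?thesis
  proof (rule nth_equalityI)
    show "length xs = length (replicate p (xs ! 0))" using len by simp
    fix i assume i: "i < length xs"
    have "replicate p (xs ! 0) ! i = xs ! 0" using i len by simp
    moreover have "xs ! i = xs ! 0" using i len all by blast
    ultimately show "xs ! i = replicate p (xs ! 0) ! i" by simp
  qed
qed

lemma necklace_dvd:
  fixes S :: "'a list set"
  assumes "finite S" "prime p"
    and "\<forall>xs\<in>S. length xs = p" "\<forall>xs\<in>S. rotate1 xs \<in> S"
    and "\<forall>xs\<in>S. \<forall>k. 0 < k \<and> k < p \<longrightarrow> rotate k xs \<noteq> xs"
  shows "p dvd card S"
  using assms
proof (induction "card S" arbitrary: S rule: less_induct)
  case less
  show ?case
  proof (cases "S = {}")
    case True then show ?thesis by simp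
  next
    case False
    then obtain xs where xs: "xs \<in> S" by blast
    have p0: "p > 0" using less.prems prime_gt_0_nat by blast
    have rotS: "rotate k ys \<in> S" if "ys \<in> S" for k ys
      using that
    proof (induction k)
      case 0 then show ?case by simp
    next
      case (Suc k) then show ?case using less.prems(4) by simp
    qed
    define Orb where "Orb = (\<lambda>k. rotate k xs) ` {0..<p}"
    have OS: "Orb \<subseteq> S" unfolding Orb_def using rotS xs by auto
    have inj: "inj_on (\<lambda>k. rotate k xs) {0..<p}"
    proof (rule inj_onI)
      fix k l assume kl: "k \<in> {0..<p}" "l \<in> {0..<p}" "rotate k xs = rotate l xs"
      show "k = l"
      proof (rule ccontr)
        assume "k \<noteq> l"
        then consider "k < l" | "l < k" by linarith
        then show False
        proof cases
          case 1
          have "rotate (l - k) (rotate k xs) = rotate l xs"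
            using 1 by (simp add: rotate_rotate)
          then have "rotate (l - k) (rotate k xs) = rotate k xs" using kl by simp
          moreover have "rotate k xs \<in> S" using rotS xs by blast
          ultimately show False using less.prems(5) 1 kl by auto
        next
          case 2
          have "rotate (k - l) (rotate l xs) = rotate k xs"
            using 2 by (simp add: rotate_rotate)
          then have "rotate (k - l) (rotate l xs) = rotate l xs" using kl by simp
          moreover have "rotate l xs \<in> S" using rotS xs by blast
          ultimately show False using less.prems(5) 2 kl by auto
        qed
      qed
    qed
    have cardO: "card Orb = p" unfolding Orb_def using inj by (simp add: card_image)
    have clos: "\<forall>ys\<in>S - Orb. rotate1 ys \<in> S - Orb"
    proof
      fix ys assume ys: "ys \<in> S - Orb"
      have "rotate1 ys \<in> S" using ys less.prems by auto
      moreover have "rotate1 ys \<notin> Orb"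
      proof
        assume "rotate1 ys \<in> Orb"
        then obtain k where k: "k < p" "rotate1 ys = rotate k xs" unfolding Orb_def by auto
        have ly: "length ys = p" using ys less.prems by auto
        have "ys = rotate (p - 1) (rotate1 ys)"
          proof -
          have "rotate (p - 1) (rotate1 ys) = rotate (Suc (p - 1)) ys"
            by (simp add: rotate1_rotate_swap)
          also have "\<dots> = ys" using ly p0 by simp
          finally show ?thesis by simp
        qed
        also have "\<dots> = rotate (p - 1 + k) xs" using k by (simp add: rotate_rotate)
        also have "\<dots> = rotate ((p - 1 + k) mod p) xs"
          using less.prems xs rotate_conv_mod[of "p - 1 + k" xs] by simp
        finally have "ys = rotate ((p - 1 + k) mod p) xs" .
        then have "ys \<in> Orb" unfolding Orb_def using p0
          by (intro image_eqI[where x="(p - 1 + k) mod p"]) auto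
        then show False using ys by blast
      qed
      ultimately show "rotate1 ys \<in> S - Orb" by blast
    qed
    have fin: "finite Orb" using OS less.prems finite_subset by blast
    have le: "card Orb \<le> card S" using OS less.prems(1) by (rule card_mono[rotated])
    have cd: "card (S - Orb) = card S - card Orb" using fin OS by (rule card_Diff_subset)
    have "card (S - Orb) < card S" using cd le cardO p0 by linarith
    then have dv: "p dvd card (S - Orb)"
      by (rule less.hyps) (use less.prems clos in auto)
    have eq: "card S = card (S - Orb) + p"
      using cd le cardO by linarith
    have "p dvd card (S - Orb) + p" using dv by simp
    then show ?thesis using eq by simp
  qed
qed


definition mulset :: "nat \<Rightarrow> nat \<Rightarrow> nat set \<Rightarrow> nat set" where
  "mulset M u A = (\<lambda>a. (u * a) mod M) ` A"

lemma tiling_sub: "tiling M A B \<Longrightarrow> A \<subseteq> {0..<M} \<and> B \<subseteq> {0..<M}"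
  unfolding tiling_def ZM_def by blast

lemma tiling_unique:
  assumes t: "tiling M A B" and M: "M > 0"
    and in1: "a1 \<in> A" "b1 \<in> B" and in2: "a2 \<in> A" "b2 \<in> B"
    and eq: "(a1 + b1) mod M = (a2 + b2) mod M"
  shows "a1 = a2 \<and> b1 = b2"
proof -
  let ?x = "(a1 + b1) mod M"
  have x: "?x \<in> ZM M" using M unfolding ZM_def by simp
  then have "\<exists>!ab. fst ab \<in> A \<and> snd ab \<in> B \<and> (fst ab + snd ab) mod M = ?x"
    using t unfolding tiling_def by blast
  then obtain ab0 where u: "\<forall>y. fst y \<in> A \<and> snd y \<in> B \<and> (fst y + snd y) mod M = ?x \<longrightarrow> y = ab0"
    by blast
  have "(a1, b1) = ab0" using u in1 by simp
  moreover have "(a2, b2) = ab0" using u in2 eq by simp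
  ultimately have "(a1, b1) = (a2, b2)" by simp
  then show ?thesis by simp
qed

lemma tiling_exists:
  assumes t: "tiling M A B" and M: "M > 0"
  shows "\<exists>a\<in>A. \<exists>b\<in>B. (a + b) mod M = y mod M"
proof -
  have "y mod M \<in> ZM M" using M unfolding ZM_def by simp
  then obtain ab where "fst ab \<in> A \<and> snd ab \<in> B \<and> (fst ab + snd ab) mod M = y mod M"
    using t unfolding tiling_def by blast
  then show ?thesis by blast
qed

lemma tiling_card:
  assumes t: "tiling M A B" and M: "M > 0"
  shows "card A * card B = M"
proof -
  have sub: "A \<subseteq> {0..<M}" "B \<subseteq> {0..<M}" using tiling_sub[OF t] by auto
  have "bij_betw (\<lambda>(a, b). (a + b) mod M) (A \<times> B) {0..<M}"
  proof (rule bij_betw_imageI)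
    show "inj_on (\<lambda>(a, b). (a + b) mod M) (A \<times> B)"
    proof (rule inj_onI)
      fix x y assume "x \<in> A \<times> B" "y \<in> A \<times> B"
        "(\<lambda>(a, b). (a + b) mod M) x = (\<lambda>(a, b). (a + b) mod M) y"
      then show "x = y" using tiling_unique[OF t M, of "fst x" "snd x" "fst y" "snd y"]
        by (cases x, cases y) simp
    qed
    show "(\<lambda>(a, b). (a + b) mod M) ` (A \<times> B) = {0..<M}"
    proof
      show "(\<lambda>(a, b). (a + b) mod M) ` (A \<times> B) \<subseteq> {0..<M}" using M by auto
      show "{0..<M} \<subseteq> (\<lambda>(a, b). (a + b) mod M) ` (A \<times> B)"
      proof
        fix y assume y: "y \<in> {0..<M}"
        obtain a b where ab: "a \<in> A" "b \<in> B" "(a + b) mod M = y mod M"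
          using tiling_exists[OF t M] by blast
        then show "y \<in> (\<lambda>(a, b). (a + b) mod M) ` (A \<times> B)"
          using y by (intro image_eqI[where x="(a, b)"]) auto
      qed
    qed
  qed
  then have "card (A \<times> B) = card {0..<M}" by (rule bij_betw_same_card)
  then have "card (A \<times> B) = M" by simp
  then show ?thesis by (simp add: card_cartesian_product)
qed

lemma sum_ge1_eq:
  fixes f :: "'a \<Rightarrow> nat"
  assumes fin: "finite I" and ge: "\<forall>i\<in>I. f i \<ge> 1" and le: "sum f I \<le> card I" and i0: "i0 \<in> I"
  shows "f i0 = 1"
proof (rule ccontr)
  assume "f i0 \<noteq> 1"
  then have f2: "f i0 \<ge> 2" using ge i0 by (metis One_nat_def Suc_1 Suc_leI le_neq_implies_less)
  have s: "sum f I = f i0 + sum f (I - {i0})"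
    using fin i0 by (rule sum.remove)
  have m: "sum f (I - {i0}) \<ge> sum (\<lambda>_. 1) (I - {i0})"
    by (rule sum_mono) (use ge in blast)
  have c: "sum (\<lambda>_. (1::nat)) (I - {i0}) = card I - 1" using fin i0 by simp
  have "card I \<ge> 1" using fin i0 card_gt_0_iff by (metis One_nat_def Suc_leI empty_iff)
  then show False using f2 s m c le by linarith
qed


lemma mod_fix_lemma:
  fixes x s M :: nat
  assumes M: "M > 0" and x: "x < M"
  shows "((x + (M - s mod M)) mod M + s) mod M = x"
proof -
  have d: "s = M * (s div M) + s mod M" by simp
  have lt: "s mod M < M" using M by simp
  have "x + (M - s mod M) + s = x + M + M * (s div M)"
    using d lt by linarith
  then have e: "x + (M - s mod M) + s = x + M * Suc (s div M)" by simp
  have "(x + M * Suc (s div M)) mod M = x" using x by (simp only: mod_mult_self2 mod_less)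
  have "(x + (M - s mod M) + s) mod M = (x + M * Suc (s div M)) mod M"
    using e by (rule arg_cong[where f="\<lambda>t. t mod M"])
  also note \<open>(x + M * Suc (s div M)) mod M = x\<close>
  finally have "(x + (M - s mod M) + s) mod M = x" .
  then show ?thesis by (simp add: mod_add_left_eq)
qed

lemma tij_prime:
  assumes M: "M > 0" and t: "tiling M A B" and p: "prime p" and cop: "coprime p M"
  shows "tiling M (mulset M p A) B"
proof -
  have subA: "A \<subseteq> {0..<M}" and subB: "B \<subseteq> {0..<M}" using tiling_sub[OF t] by auto
  have finA: "finite A" using subA finite_subset by blast
  have finB: "finite B" using subB finite_subset by blast
  have p1: "p > 1" using p prime_gt_1_nat by blast
  then have p0: "p > 0" by simp
  have cardAB: "card A * card B = M" by (rule tiling_card[OF t M])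
  define rep where "rep x = {ab \<in> A \<times> B. (p * fst ab + snd ab) mod M = x}" for x
  have nonempty: "rep x \<noteq> {}" if x: "x < M" for x
  proof -
    define T where "T = {xs. set xs \<subseteq> A \<and> length xs = p \<and> (\<exists>b\<in>B. (sum_list xs + b) mod M = x)}"
    define L where "L = {ys. set ys \<subseteq> A \<and> length ys = p - 1}"
    define A' where "A' = {a \<in> A. \<exists>b\<in>B. (p * a + b) mod M = x}"
    have finT: "finite T"
    proof -
      have "T \<subseteq> {xs. set xs \<subseteq> A \<and> length xs = p}" unfolding T_def by blast
      then show ?thesis using finite_lists_length_eq[OF finA] finite_subset by blast
    qed
    have cardL: "card L = card A ^ (p - 1)" unfolding L_def by (rule card_lists_length_eq[OF finA])
    have injT: "inj_on tl T"
    proof (rule inj_onI)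
      fix xs ys assume xs: "xs \<in> T" and ys: "ys \<in> T" and e: "tl xs = tl ys"
      from xs obtain b1 where b1: "b1 \<in> B" "(sum_list xs + b1) mod M = x"
        and lx: "length xs = p" and sx: "set xs \<subseteq> A" unfolding T_def by blast
      from ys obtain b2 where b2: "b2 \<in> B" "(sum_list ys + b2) mod M = x"
        and ly: "length ys = p" and sy: "set ys \<subseteq> A" unfolding T_def by blast
      have xne: "xs \<noteq> []" using lx p0 by auto
      have yne: "ys \<noteq> []" using ly p0 by auto
      have xs_eq: "xs = hd xs # tl xs" using xne by simp
      have ys_eq: "ys = hd ys # tl ys" using yne by simp
      have sx': "sum_list xs = hd xs + sum_list (tl xs)"
        using xne by (cases xs) auto
      have sy': "sum_list ys = hd ys + sum_list (tl xs)"
        using yne e by (cases ys) auto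
      have "[hd xs + b1 + sum_list (tl xs) = hd ys + b2 + sum_list (tl xs)] (mod M)"
        unfolding cong_def using b1(2) b2(2) sx' sy' by (simp add: ac_simps)
      then have "[hd xs + b1 = hd ys + b2] (mod M)" by (simp add: cong_add_rcancel_nat)
      then have "(hd xs + b1) mod M = (hd ys + b2) mod M" by (simp add: cong_def)
      moreover have "hd xs \<in> A" using sx xne hd_in_set by blast
      moreover have "hd ys \<in> A" using sy yne hd_in_set by blast
      ultimately have "hd xs = hd ys" using tiling_unique[OF t M] b1(1) b2(1) by blast
      then show "xs = ys" using e xne yne list.collapse by metis
    qed
    have imT: "tl ` T = L"
    proof
      show "tl ` T \<subseteq> L"
      proof
        fix ys assume "ys \<in> tl ` T"
        then obtain xs where xs: "xs \<in> T" and ys: "ys = tl xs" by blast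
        have "set xs \<subseteq> A" "length xs = p" using xs unfolding T_def by auto
        moreover have "set (tl xs) \<subseteq> set xs" by (cases xs) auto
        ultimately show "ys \<in> L" unfolding L_def using ys by auto
      qed
      show "L \<subseteq> tl ` T"
      proof
        fix ys assume ys: "ys \<in> L"
        let ?s = "sum_list ys"
        obtain a b where ab: "a \<in> A" "b \<in> B" "(a + b) mod M = (x + (M - ?s mod M)) mod M"
          using tiling_exists[OF t M] by blast
        have "(sum_list (a # ys) + b) mod M = ((a + b) + ?s) mod M" by (simp add: ac_simps)
        also have "\<dots> = ((a + b) mod M + ?s) mod M" by (simp add: mod_add_left_eq)
        also have "\<dots> = x" using ab(3) mod_fix_lemma[OF M x] by simp
        finally have "(sum_list (a # ys) + b) mod M = x" .
        then have "a # ys \<in> T" unfolding T_def using ab ys unfolding L_def using p0 by auto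
        then show "ys \<in> tl ` T" by (intro image_eqI[where x="a # ys"]) auto
      qed
    qed
    have cardT: "card T = card A ^ (p - 1)"
      using card_image[OF injT] imT cardL by simp
    define C where "C = (\<lambda>a. replicate p a) ` A'"
    define NC where "NC = T - C"
    have CT: "C \<subseteq> T"
    proof
      fix xs assume "xs \<in> C"
      then obtain a where a: "a \<in> A'" and xs: "xs = replicate p a" unfolding C_def by blast
      from a obtain b where "a \<in> A" "b \<in> B" "(p * a + b) mod M = x" unfolding A'_def by blast
      then show "xs \<in> T" unfolding T_def xs using p0 by (auto simp: sum_list_replicate)
    qed
    have injC: "inj_on (\<lambda>a. replicate p a) A'"
      by (rule inj_onI) (use p0 in simp)
    have cardC: "card C = card A'" unfolding C_def by (rule card_image[OF injC])
    have finC: "finite C" using CT finT finite_subset by blast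
    have dvdNC: "p dvd card NC"
    proof (rule necklace_dvd)
      show "finite NC" unfolding NC_def using finT by simp
      show "prime p" by (rule p)
      show "\<forall>xs\<in>NC. length xs = p" unfolding NC_def T_def by blast
      show "\<forall>xs\<in>NC. rotate1 xs \<in> NC"
      proof
        fix xs assume xs: "xs \<in> NC"
        then have xT: "xs \<in> T" and xC: "xs \<notin> C" unfolding NC_def by auto
        have rT: "rotate1 xs \<in> T" using xT unfolding T_def by (simp add: sum_list_rotate1)
        have "rotate1 xs \<notin> C"
        proof
          assume "rotate1 xs \<in> C"
          then obtain a where a: "a \<in> A'" and r: "rotate1 xs = replicate p a" unfolding C_def by blast
          have "\<forall>y\<in>set xs. y = a"
          proof
            fix y assume "y \<in> set xs"
            then have "y \<in> set (rotate1 xs)" by simp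
            then show "y = a" using r by simp
          qed
          then have "replicate (length xs) a = xs" by (rule replicate_length_same)
          moreover have "length xs = p" using xT unfolding T_def by blast
          ultimately have "xs = replicate p a" by simp
          then have "xs \<in> C" unfolding C_def using a by blast
          then show False using xC by blast
        qed
        then show "rotate1 xs \<in> NC" unfolding NC_def using rT by blast
      qed
      show "\<forall>xs\<in>NC. \<forall>k. 0 < k \<and> k < p \<longrightarrow> rotate k xs \<noteq> xs"
      proof (intro ballI allI impI)
        fix xs k assume xs: "xs \<in> NC" and k: "0 < k \<and> k < p"
        show "rotate k xs \<noteq> xs"
        proof
          assume r: "rotate k xs = xs"
          have xT: "xs \<in> T" and xC: "xs \<notin> C" using xs unfolding NC_def by auto
          have lx: "length xs = p" and sx: "set xs \<subseteq> A" using xT unfolding T_def by auto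
          obtain b where b: "b \<in> B" "(sum_list xs + b) mod M = x" using xT unfolding T_def by blast
          obtain c where xr: "xs = replicate p c"
            using rotate_fix_const[OF p lx _ _ r] k by blast
          have "c \<in> set xs" using xr p0 by simp
          then have a0: "c \<in> A" using sx by blast
          have "sum_list xs = p * c" using xr by (simp add: sum_list_replicate)
          then have "c \<in> A'" unfolding A'_def using a0 b by auto
          then have "xs \<in> C" unfolding C_def using xr by blast
          then show False using xC by blast
        qed
      qed
    qed
    have "card NC = card T - card C" unfolding NC_def using finC CT by (rule card_Diff_subset)
    moreover have "card C \<le> card T" using CT finT by (rule card_mono[rotated])
    ultimately have sumc: "card A ^ (p - 1) = card NC + card A'" using cardT cardC by linarith
    have "A' \<noteq> {}"
    proof
      assume "A' = {}"
      then have "p dvd card A ^ (p - 1)" using sumc dvdNC by simp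
      then have "p dvd card A" using p prime_dvd_power by blast
      moreover have "card A dvd M" using cardAB by (metis dvd_triv_left)
      ultimately have "p dvd M" by (rule dvd_trans)
      then have "is_unit p" using cop coprime_common_divisor[of p M p] by simp
      then show False using p1 by simp
    qed
    then obtain a where "a \<in> A'" by blast
    then obtain b where "a \<in> A" "b \<in> B" "(p * a + b) mod M = x" unfolding A'_def by blast
    then have "(a, b) \<in> rep x" unfolding rep_def by simp
    then show ?thesis by blast
  qed
  have finrep: "finite (rep x)" for x
  proof -
    have "rep x \<subseteq> A \<times> B" unfolding rep_def by blast
    then show ?thesis using finA finB finite_subset by blast
  qed
  have UN: "(\<Union>x\<in>{0..<M}. rep x) = A \<times> B"
  proof
    show "(\<Union>x\<in>{0..<M}. rep x) \<subseteq> A \<times> B" unfolding rep_def by blast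
    show "A \<times> B \<subseteq> (\<Union>x\<in>{0..<M}. rep x)"
    proof
      fix ab assume ab: "ab \<in> A \<times> B"
      let ?x = "(p * fst ab + snd ab) mod M"
      have "ab \<in> rep ?x" unfolding rep_def using ab by simp
      moreover have "?x \<in> {0..<M}" using M by simp
      ultimately show "ab \<in> (\<Union>x\<in>{0..<M}. rep x)" by blast
    qed
  qed
  have "card (\<Union>x\<in>{0..<M}. rep x) = (\<Sum>x\<in>{0..<M}. card (rep x))"
  proof (rule card_UN_disjoint)
    show "finite {0..<M}" by simp
    show "\<forall>i\<in>{0..<M}. finite (rep i)" using finrep by blast
    show "\<forall>i\<in>{0..<M}. \<forall>j\<in>{0..<M}. i \<noteq> j \<longrightarrow> rep i \<inter> rep j = {}"
      unfolding rep_def by auto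
  qed
  then have sumM: "(\<Sum>x\<in>{0..<M}. card (rep x)) = M"
    using UN cardAB by (simp add: card_cartesian_product)
  have card1: "card (rep x) = 1" if x: "x < M" for x
  proof (rule sum_ge1_eq[where I="{0..<M}" and f="\<lambda>x. card (rep x)"])
    show "finite {0..<M}" by simp
    show "\<forall>i\<in>{0..<M}. 1 \<le> card (rep i)"
    proof
      fix i assume "i \<in> {0..<M}"
      then have "rep i \<noteq> {}" using nonempty by simp
      then show "1 \<le> card (rep i)" using finrep[of i] by (simp add: Suc_leI card_gt_0_iff)
    qed
    show "(\<Sum>x\<in>{0..<M}. card (rep x)) \<le> card {0..<M}" using sumM by simp
    show "x \<in> {0..<M}" using x by simp
  qed
  show ?thesis unfolding tiling_def
  proof (intro conjI ballI)
    show "mulset M p A \<subseteq> ZM M" unfolding mulset_def ZM_def using M by auto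
    show "B \<subseteq> ZM M" using subB unfolding ZM_def by simp
    fix x assume "x \<in> ZM M"
    then have x: "x < M" unfolding ZM_def by simp
    then obtain ab0 where r1: "rep x = {ab0}" using card1[OF x] card_1_singletonE by blast
    have "ab0 \<in> rep x" using r1 by simp
    then have ab0: "fst ab0 \<in> A" "snd ab0 \<in> B" "(p * fst ab0 + snd ab0) mod M = x"
      unfolding rep_def by auto
    show "\<exists>!ab. fst ab \<in> mulset M p A \<and> snd ab \<in> B \<and> (fst ab + snd ab) mod M = x"
    proof (rule ex1I[where a="((p * fst ab0) mod M, snd ab0)"])
      show "fst ((p * fst ab0) mod M, snd ab0) \<in> mulset M p A \<and> snd ((p * fst ab0) mod M, snd ab0) \<in> B
        \<and> (fst ((p * fst ab0) mod M, snd ab0) + snd ((p * fst ab0) mod M, snd ab0)) mod M = x"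
        using ab0 unfolding mulset_def by (simp add: mod_add_left_eq)
      fix ab assume ab: "fst ab \<in> mulset M p A \<and> snd ab \<in> B \<and> (fst ab + snd ab) mod M = x"
      then obtain a' where a': "a' \<in> A" "fst ab = (p * a') mod M" unfolding mulset_def by blast
      have "(p * a' + snd ab) mod M = x" using ab a' by (simp add: mod_add_left_eq)
      then have "(a', snd ab) \<in> rep x" unfolding rep_def using a' ab by simp
      then have "(a', snd ab) = ab0" using r1 by simp
      then show "ab = ((p * fst ab0) mod M, snd ab0)" using a' by (cases ab) auto
    qed
  qed
qed


lemma mulset_mult:
  "mulset M (q * v) A = mulset M q (mulset M v A)"
  unfolding mulset_def image_image by (simp add: mod_mult_right_eq mult.assoc)

lemma tij:
  assumes M: "M > 0" and t: "tiling M A B" and cop: "coprime u M"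
  shows "tiling M (mulset M u A) B"
  using cop
proof (induction u rule: less_induct)
  case (less u)
  have subA: "A \<subseteq> {0..<M}" using tiling_sub[OF t] by auto
  show ?case
  proof (cases "u \<le> 1")
    case True
    then consider "u = 0" | "u = 1" by linarith
    then show ?thesis
    proof cases
      case 1
      then have M1: "M = 1" using less.prems by simp
      obtain a where a: "a \<in> A" using tiling_exists[OF t M, of 0] by blast
      have A0: "A = {0}" using subA a M1 by auto
      have "mulset M u A = A" unfolding mulset_def using A0 M1 by simp
      then show ?thesis using t by simp
    next
      case 2
      have "mulset M u A = A" unfolding mulset_def using 2 subA
        by (force simp: image_iff)
      then show ?thesis using t by simp
    qed
  next
    case False
    then have "u \<noteq> 1" by simp
    then obtain q where q: "prime q" "q dvd u" using prime_factor_nat by blast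
    then obtain v where v: "u = q * v" by (elim dvdE)
    have q1: "q > 1" using q prime_gt_1_nat by blast
    have "v > 0" using v False by (cases v) auto
    then have vu: "v < u" using v q1 by simp
    have copv: "coprime v M" using less.prems v by simp
    have copq: "coprime q M" using less.prems v by simp
    have "tiling M (mulset M v A) B" using less.IH[OF vu copv] .
    then have "tiling M (mulset M q (mulset M v A)) B" by (rule tij_prime[OF M _ q(1) copq])
    then show ?thesis using v by (simp add: mulset_mult)
  qed
qed

lemma div_excl:
  assumes M: "M > 0" and t: "tiling M A B" and cop: "coprime u M"
    and a: "a1 \<in> A" "a2 \<in> A" and b: "b1 \<in> B" "b2 \<in> B"
    and c: "[u * a1 + b1 = u * a2 + b2] (mod M)"
  shows "a1 = a2"
proof -
  have t': "tiling M (mulset M u A) B" by (rule tij[OF M t cop])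
  have c1: "(u * a1) mod M \<in> mulset M u A" "(u * a2) mod M \<in> mulset M u A"
    unfolding mulset_def using a by auto
  have "((u * a1) mod M + b1) mod M = ((u * a2) mod M + b2) mod M"
    using c unfolding cong_def by (simp add: mod_add_left_eq)
  then have "(u * a1) mod M = (u * a2) mod M"
    using tiling_unique[OF t' M c1(1) b(1) c1(2) b(2)] by blast
  then have "[u * a1 = u * a2] (mod M)" by (simp add: cong_def)
  then have "[a1 = a2] (mod M)" using cop by (simp add: cong_mult_lcancel_nat coprime_commute)
  moreover have "a1 < M" "a2 < M" using a tiling_sub[OF t] by auto
  ultimately show ?thesis by (simp add: cong_def)
qed

lemma lift_coprime:
  fixes u0 m M :: int
  assumes M: "M \<noteq> 0" and cop: "coprime u0 m"
  shows "\<exists>u. [u = u0] (mod m) \<and> coprime u M"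
proof -
  define S where "S = {q \<in> prime_factors M. \<not> q dvd u0}"
  define k where "k = \<Prod>S"
  have finS: "finite S" unfolding S_def by simp
  define u where "u = u0 + m * k"
  have c1: "[u = u0] (mod m)" unfolding u_def cong_iff_dvd_diff by simp
  have "coprime u M"
  proof (rule ccontr)
    assume nc: "\<not> coprime u M"
    have g0: "gcd u M \<noteq> 0" using M by simp
    have gu: "\<not> is_unit (gcd u M)" unfolding is_unit_gcd using nc .
    obtain q where q: "prime q" "q dvd gcd u M" using prime_divisorE[OF g0 gu] by blast
    have qu: "q dvd u" and qM: "q dvd M" using q(2) by auto
    have qPF: "q \<in> prime_factors M" using q(1) qM M by (simp add: in_prime_factors_iff)
    show False
    proof (cases "q dvd u0")
      case True
      have nqm: "\<not> q dvd m"
      proof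
        assume "q dvd m"
        then have "is_unit q" using coprime_common_divisor[OF cop True] by blast
        then show False using q(1) not_prime_unit by blast
      qed
      have nqk: "\<not> q dvd k"
      proof
        assume "q dvd k"
        then obtain r where r: "r \<in> S" "q dvd r" unfolding k_def
          using prime_dvd_prod_iff[OF finS q(1), of "\<lambda>x. x"] by auto
        have "prime r" "\<not> r dvd u0" using r(1) unfolding S_def by (auto simp: in_prime_factors_iff)
        then have "q = r" using primes_dvd_imp_eq[OF q(1)] r(2) by blast
        then show False using True \<open>\<not> r dvd u0\<close> by simp
      qed
      have "\<not> q dvd m * k" using nqm nqk q(1) by (simp add: prime_dvd_mult_iff)
      moreover have "q dvd m * k" using qu True unfolding u_def by (simp add: dvd_add_right_iff)
      ultimately show False by blast
    next
      case False
      then have "q \<in> S" unfolding S_def using qPF by simp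
      then have "q dvd k" unfolding k_def using dvd_prodI[of S q "\<lambda>x. x"] finS by simp
      then have "q dvd m * k" by simp
      then have "q dvd u0" using qu unfolding u_def by (simp add: dvd_add_left_iff)
      then show False using False by blast
    qed
  qed
  then show ?thesis using c1 by blast
qed

lemma unit_exists:
  fixes X Y M :: int
  assumes M: "M > 0" and g: "gcd X M = gcd Y M"
  shows "\<exists>u. coprime u M \<and> [u * X = Y] (mod M)"
proof -
  define d where "d = gcd X M"
  have d0: "d > 0" unfolding d_def using M by simp
  obtain s where s: "X = d * s" unfolding d_def by (meson gcd_dvd1 dvdE)
  obtain t where tt: "Y = d * t" unfolding d_def using g by (metis gcd_dvd1 dvdE)
  obtain m where m: "M = d * m" unfolding d_def by (meson gcd_dvd2 dvdE)
  have dX: "gcd X M = d" unfolding d_def by simp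
  have dY: "gcd Y M = d" unfolding d_def using g by simp
  have "d * gcd s m = gcd (d * s) (d * m)" using gcd_mult_distrib_int[of d s m] d0 by simp
  also have "\<dots> = gcd X M" using s m by simp
  also have "\<dots> = d" by (rule dX)
  finally have "gcd s m = 1" using d0 by simp
  then have cs: "coprime s m" by (simp add: coprime_iff_gcd_eq_1)
  have "d * gcd t m = gcd (d * t) (d * m)" using gcd_mult_distrib_int[of d t m] d0 by simp
  also have "\<dots> = gcd Y M" using tt m by simp
  also have "\<dots> = d" by (rule dY)
  finally have "gcd t m = 1" using d0 by simp
  then have ct: "coprime t m" by (simp add: coprime_iff_gcd_eq_1)
  obtain s' where s': "[s * s' = 1] (mod m)" using cong_solve_coprime_int[OF cs] by blast
  have cs': "coprime s' m" using s' coprime_iff_invertible_int by (metis mult.commute)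
  define u0 where "u0 = t * s'"
  have cu0: "coprime u0 m" unfolding u0_def using ct cs' by simp
  obtain u where u: "[u = u0] (mod m)" "coprime u M" using lift_coprime[OF _ cu0, of M] M by auto
  have "[u * s = u0 * s] (mod m)" using u(1) by (rule cong_scalar_right)
  moreover have "[u0 * s = t * 1] (mod m)" unfolding u0_def
    using cong_scalar_left[OF s', of t] by (simp add: ac_simps)
  ultimately have "[u * s = t] (mod m)" by (simp add: cong_trans)
  then have "m dvd u * s - t" by (simp add: cong_iff_dvd_diff)
  then have "d * m dvd d * (u * s - t)" by simp
  then have "M dvd u * X - Y" using m s tt by (simp add: algebra_simps)
  then have "[u * X = Y] (mod M)" by (simp add: cong_iff_dvd_diff)
  then show ?thesis using u(2) by blast
qed

lemma gcd_drop_power: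
  fixes X L q :: int
  assumes q: "prime q" and nd: "\<not> q ^ k dvd X"
  shows "gcd X (L * q ^ Suc k) = gcd X (L * q ^ k)"
proof (rule zdvd_antisym_nonneg)
  show "0 \<le> gcd X (L * q ^ Suc k)" "0 \<le> gcd X (L * q ^ k)" by simp_all
  show "gcd X (L * q ^ k) dvd gcd X (L * q ^ Suc k)"
  proof (rule gcd_greatest)
    show "gcd X (L * q ^ k) dvd X" by simp
    have "q ^ k dvd q ^ Suc k" by (rule le_imp_power_dvd) simp
    then have "L * q ^ k dvd L * q ^ Suc k" by (rule mult_dvd_mono[OF dvd_refl])
    then show "gcd X (L * q ^ k) dvd L * q ^ Suc k" using gcd_dvd2 dvd_trans by blast
  qed
  show "gcd X (L * q ^ Suc k) dvd gcd X (L * q ^ k)"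
  proof -
    define g where "g = gcd X (L * q ^ Suc k)"
    have X0: "X \<noteq> 0" using nd by auto
    then have g0: "g \<noteq> 0" unfolding g_def by simp
    have nu: "\<not> is_unit q" using q not_prime_unit by blast
    obtain g' where gd0: "g = q ^ multiplicity q g * g'" and ng: "\<not> q dvd g'"
      using multiplicity_decompose'[OF g0 nu] by blast
    define e where "e = multiplicity q g"
    have gd: "g = q ^ e * g'" unfolding e_def by (rule gd0)
    have gX: "g dvd X" unfolding g_def by simp
    have "q ^ e dvd g" using gd by (metis dvd_triv_left)
    then have qeX: "q ^ e dvd X" using gX dvd_trans by blast
    have ek: "e < k"
    proof (rule ccontr)
      assume "\<not> e < k"
      then have "q ^ k dvd q ^ e" by (intro le_imp_power_dvd) simp
      then show False using qeX nd dvd_trans by blast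
    qed
    have "g' dvd g" using gd by (metis dvd_triv_right)
    then have "g' dvd L * q ^ Suc k" unfolding g_def using gcd_dvd2 dvd_trans by blast
    moreover have "coprime g' (q ^ Suc k)" using prime_imp_power_coprime[OF q ng] .
    ultimately have g'L: "g' dvd L" using coprime_dvd_mult_left_iff by blast
    have "q ^ e dvd q ^ k" using ek by (intro le_imp_power_dvd) simp
    then have "q ^ e * g' dvd q ^ k * L" using g'L by (rule mult_dvd_mono)
    then have "q ^ e * g' dvd L * q ^ k" by (simp only: mult.commute[of "q ^ k" L])
    then have "g dvd L * q ^ k" using gd by (simp only:)
    then show ?thesis using gX unfolding g_def by (intro gcd_greatest)
  qed
qed




lemma nat_cong_as_int:
  "[a1 = a2] (mod m) \<longleftrightarrow> int m dvd int a1 - int a2"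
proof -
  have "[a1 = a2] (mod m) \<longleftrightarrow> [int a1 = int a2] (mod int m)" by (simp only: cong_int_iff)
  also have "\<dots> \<longleftrightarrow> int m dvd int a1 - int a2" by (rule cong_iff_dvd_diff)
  finally show ?thesis .
qed

lemma core:
  fixes M R p q e f a1 a2 b1 b2 :: nat
  assumes M0: "M > 0" and t: "tiling M A B"
    and Mf: "M = R * p ^ Suc e * q ^ Suc f" and p: "prime p" and q: "prime q"
    and a: "a1 \<in> A" "a2 \<in> A" and b: "b1 \<in> B" "b2 \<in> B"
    and c: "[a1 + b1 = a2 + b2] (mod R * p ^ e * q ^ f)"
    and np: "\<not> [a1 = a2] (mod p ^ e)" and nq: "\<not> [a1 = a2] (mod q ^ f)"
  shows False
proof -
  define N where "N = R * p ^ e * q ^ f"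
  define X where "X = int a1 - int a2"
  define Y where "Y = int b2 - int b1"
  have ip: "prime (int p)" using p by (simp add: prime_nat_int_transfer)
  have iq: "prime (int q)" using q by (simp add: prime_nat_int_transfer)
  have "int N dvd int (a1 + b1) - int (a2 + b2)"
    using c unfolding N_def[symmetric] nat_cong_as_int .
  moreover have "int (a1 + b1) - int (a2 + b2) = X - Y" unfolding X_def Y_def by simp
  ultimately have cXY: "[X = Y] (mod int N)" by (simp add: cong_iff_dvd_diff)
  have npX: "\<not> int p ^ e dvd X" using np unfolding nat_cong_as_int X_def by simp
  have nqX: "\<not> int q ^ f dvd X" using nq unfolding nat_cong_as_int X_def by simp
  have pN: "int p ^ e dvd int N" unfolding N_def by simp
  have qN: "int q ^ f dvd int N" unfolding N_def by simp
  have npY: "\<not> int p ^ e dvd Y"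
  proof
    assume "int p ^ e dvd Y"
    moreover have "[X = Y] (mod int p ^ e)" using cong_dvd_modulus[OF cXY pN] .
    ultimately show False using npX cong_dvd_iff by blast
  qed
  have nqY: "\<not> int q ^ f dvd Y"
  proof
    assume "int q ^ f dvd Y"
    moreover have "[X = Y] (mod int q ^ f)" using cong_dvd_modulus[OF cXY qN] .
    ultimately show False using nqX cong_dvd_iff by blast
  qed
  have iM: "int M = (int R * int p ^ Suc e) * int q ^ Suc f" using Mf by simp
  have iN: "int N = (int R * int q ^ f) * int p ^ e" unfolding N_def by (simp add: ac_simps)
  have drop: "gcd W (int M) = gcd W (int N)"
    if nW1: "\<not> int p ^ e dvd W" and nW2: "\<not> int q ^ f dvd W" for W
  proof -
    have "gcd W (int M) = gcd W ((int R * int p ^ Suc e) * int q ^ f)"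
      unfolding iM by (rule gcd_drop_power[OF iq nW2])
    also have "(int R * int p ^ Suc e) * int q ^ f = (int R * int q ^ f) * int p ^ Suc e"
      by (simp add: ac_simps)
    also have "gcd W ((int R * int q ^ f) * int p ^ Suc e) = gcd W ((int R * int q ^ f) * int p ^ e)"
      by (rule gcd_drop_power[OF ip nW1])
    also have "\<dots> = gcd W (int N)" unfolding iN ..
    finally show ?thesis .
  qed
  have "gcd X (int M) = gcd X (int N)" by (rule drop[OF npX nqX])
  also have "\<dots> = gcd Y (int N)" by (rule cong_gcd_eq[OF cXY])
  also have "\<dots> = gcd Y (int M)" by (rule drop[OF npY nqY, symmetric])
  finally have gXY: "gcd X (int M) = gcd Y (int M)" .
  obtain u where u: "coprime u (int M)" "[u * X = Y] (mod int M)"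
    using unit_exists[OF _ gXY] M0 by auto
  define u' where "u' = nat (u mod int M)"
  have iu': "int u' = u mod int M" unfolding u'_def using M0 by simp
  have "coprime (u mod int M) (int M)" using u(1) M0 by (simp add: coprime_mod_left_iff)
  then have "coprime (int u') (int M)" using iu' by simp
  then have cu': "coprime u' M" by (simp only: coprime_int_iff)
  have "[int u' = u] (mod int M)" unfolding iu' by (simp add: cong_mod_left)
  then have "[int u' * X = u * X] (mod int M)" by (rule cong_scalar_right)
  then have "[int u' * X = Y] (mod int M)" using u(2) by (rule cong_trans)
  then have "int M dvd int u' * X - Y" by (simp add: cong_iff_dvd_diff)
  moreover have "int u' * X - Y = int (u' * a1 + b1) - int (u' * a2 + b2)"
    unfolding X_def Y_def by (simp add: algebra_simps)
  ultimately have "int M dvd int (u' * a1 + b1) - int (u' * a2 + b2)" by simp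
  then have "[u' * a1 + b1 = u' * a2 + b2] (mod M)" unfolding nat_cong_as_int .
  then have "a1 = a2" by (rule div_excl[OF M0 t cu' a b])
  then show False using np by simp
qed


lemma get_pair:
  fixes M N P a b z :: nat
  assumes M0: "M > 0" and t: "tiling M A B"
    and ab: "a \<in> A" "b \<in> B" "(a + b) mod M = z"
    and NM: "N dvd M" and PN: "P dvd N"
    and fail: "\<not> (SigmaA M A B (Lam M z N) \<subseteq> A \<inter> Lam M a P \<and>
                 SigmaB M A B (Lam M z N) \<subseteq> B \<inter> Lam M b P)"
  shows "\<exists>a1\<in>A. \<exists>b1\<in>B. [a1 + b1 = a + b] (mod N) \<and> \<not> [a1 = a] (mod P)"
proof -
  have subA: "A \<subseteq> ZM M" and subB: "B \<subseteq> ZM M" using t unfolding tiling_def by auto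
  have key: "[a1 + b1 = a + b] (mod N)"
    if "(a1 + b1) mod M \<in> Lam M z N" for a1 b1
  proof -
    have "[z = (a1 + b1) mod M] (mod N)" using that unfolding Lam_def by simp
    then have "z mod N = ((a1 + b1) mod M) mod N" by (simp add: cong_def)
    then have "(a + b) mod N = (a1 + b1) mod N"
      using ab(3) mod_mod_cancel[OF NM] by metis
    then show ?thesis by (simp add: cong_def)
  qed
  from fail consider
      (A) a1 where "a1 \<in> SigmaA M A B (Lam M z N)" "a1 \<notin> A \<inter> Lam M a P"
    | (B) b1 where "b1 \<in> SigmaB M A B (Lam M z N)" "b1 \<notin> B \<inter> Lam M b P"
    by blast
  then show ?thesis
  proof cases
    case A
    then have a1: "a1 \<in> A" and "\<exists>b1\<in>B. (a1 + b1) mod M \<in> Lam M z N"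
      unfolding SigmaA_def by auto
    then obtain b1 where b1: "b1 \<in> B" "(a1 + b1) mod M \<in> Lam M z N" by blast
    have "a1 \<in> ZM M" using a1 subA by blast
    then have "\<not> [a = a1] (mod P)" using A(2) a1 unfolding Lam_def by blast
    then have "\<not> [a1 = a] (mod P)" using cong_sym by blast
    then show ?thesis using a1 b1 key by blast
  next
    case B
    then have b1: "b1 \<in> B" and "\<exists>a1\<in>A. (a1 + b1) mod M \<in> Lam M z N"
      unfolding SigmaB_def by auto
    then obtain a1 where a1: "a1 \<in> A" "(a1 + b1) mod M \<in> Lam M z N" by blast
    have "b1 \<in> ZM M" using b1 subB by blast
    then have nb: "\<not> [b = b1] (mod P)" using B(2) b1 unfolding Lam_def by blast
    have k: "[a1 + b1 = a + b] (mod N)" using key a1(2) by blast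
    have "\<not> [a1 = a] (mod P)"
    proof
      assume h: "[a1 = a] (mod P)"
      have "[a1 + b1 = a + b] (mod P)" using cong_dvd_modulus_nat[OF k PN] .
      moreover have "[a + b1 = a1 + b1] (mod P)" using h by (simp add: cong_add_rcancel_nat cong_sym)
      ultimately have "[a + b1 = a + b] (mod P)" using cong_trans by blast
      then have "[b1 = b] (mod P)" by (simp add: cong_add_lcancel_nat)
      then show False using nb cong_sym by blast
    qed
    then show ?thesis using a1(1) b1 k by blast
  qed
qed

theorem lemma7p1:
  fixes M K :: nat and p n :: "nat \<Rightarrow> nat" and A B :: "nat set"
    and i j z a b :: nat
  assumes M_def: "M = (\<Prod>\<nu>\<in>{1..K}. p \<nu> ^ n \<nu>)"
    and primes: "\<forall>\<nu>\<in>{1..K}. prime (p \<nu>)"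
    and distinct: "inj_on p {1..K}"
    and exps: "\<forall>\<nu>\<in>{1..K}. n \<nu> \<ge> 1"
    and tile: "tiling M A B"
    and ij: "i \<in> {1..K}" "j \<in> {1..K}" "i \<noteq> j"
    and z: "z \<in> ZM M"
    and ab: "a \<in> A" "b \<in> B" "(a + b) mod M = z"
  shows "\<exists>\<nu>\<in>{i, j}.
     SigmaA M A B (Lam M z (M div (p i * p j))) \<subseteq> A \<inter> Lam M a (p \<nu> ^ (n \<nu> - 1)) \<and>
     SigmaB M A B (Lam M z (M div (p i * p j))) \<subseteq> B \<inter> Lam M b (p \<nu> ^ (n \<nu> - 1))"
proof (rule ccontr)
  assume nc: "\<not> ?thesis"
  have fin: "finite {1..K}" by simp
  have pi: "prime (p i)" and pj: "prime (p j)" using primes ij by auto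
  have pos: "\<forall>\<nu>\<in>{1..K}. p \<nu> ^ n \<nu> > 0"
    using primes prime_gt_0_nat by simp
  have M0: "M > 0" unfolding M_def using pos by (simp add: prod_pos)
  define R where "R = (\<Prod>\<nu>\<in>{1..K} - {i} - {j}. p \<nu> ^ n \<nu>)"
  have j': "j \<in> {1..K} - {i}" using ij by simp
  have "M = p i ^ n i * (\<Prod>\<nu>\<in>{1..K} - {i}. p \<nu> ^ n \<nu>)"
    unfolding M_def using prod.remove[OF fin ij(1)] by simp
  also have "(\<Prod>\<nu>\<in>{1..K} - {i}. p \<nu> ^ n \<nu>) = p j ^ n j * R"
    unfolding R_def using prod.remove[of "{1..K} - {i}" j] j' by simp
  finally have Mij: "M = p i ^ n i * (p j ^ n j * R)" .
  define e where "e = n i - 1"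
  define f where "f = n j - 1"
  have ne: "n i = Suc e" unfolding e_def using exps ij by force
  have nf: "n j = Suc f" unfolding f_def using exps ij by force
  have MR: "M = R * p i ^ Suc e * p j ^ Suc f" using Mij ne nf by (simp add: ac_simps)
  define N where "N = R * p i ^ e * p j ^ f"
  have MN: "M = (p i * p j) * N" unfolding N_def using MR by (simp add: ac_simps)
  have pij0: "p i * p j > 0" using pi pj prime_gt_0_nat by simp
  have ND: "M div (p i * p j) = N" using MN pij0 by simp
  have NM: "N dvd M" using MN by simp
  have PiN: "p i ^ e dvd N" unfolding N_def by simp
  have PjN: "p j ^ f dvd N" unfolding N_def by simp
  have fi: "\<not> (SigmaA M A B (Lam M z N) \<subseteq> A \<inter> Lam M a (p i ^ e) \<and>
                 SigmaB M A B (Lam M z N) \<subseteq> B \<inter> Lam M b (p i ^ e))"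
    using nc ND unfolding e_def by auto
  have fj: "\<not> (SigmaA M A B (Lam M z N) \<subseteq> A \<inter> Lam M a (p j ^ f) \<and>
                 SigmaB M A B (Lam M z N) \<subseteq> B \<inter> Lam M b (p j ^ f))"
    using nc ND unfolding f_def by auto
  obtain a1 b1 where p1: "a1 \<in> A" "b1 \<in> B" "[a1 + b1 = a + b] (mod N)" "\<not> [a1 = a] (mod p i ^ e)"
    using get_pair[OF M0 tile ab NM PiN fi] by blast
  obtain a2 b2 where p2: "a2 \<in> A" "b2 \<in> B" "[a2 + b2 = a + b] (mod N)" "\<not> [a2 = a] (mod p j ^ f)"
    using get_pair[OF M0 tile ab NM PjN fj] by blast
  have cr: "\<And>x1 y1 x2 y2. x1 \<in> A \<Longrightarrow> x2 \<in> A \<Longrightarrow> y1 \<in> B \<Longrightarrow> y2 \<in> B \<Longrightarrow>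
      [x1 + y1 = x2 + y2] (mod R * p i ^ e * p j ^ f) \<Longrightarrow>
      \<not> [x1 = x2] (mod p i ^ e) \<Longrightarrow> \<not> [x1 = x2] (mod p j ^ f) \<Longrightarrow> False"
    using core[OF M0 tile MR pi pj] by blast
  have cN: "[x = y] (mod N) \<Longrightarrow> [x = y] (mod R * p i ^ e * p j ^ f)" for x y
    unfolding N_def .
  show False
  proof (cases "[a1 = a] (mod p j ^ f)")
    case False
    show False by (rule cr[OF p1(1) ab(1) p1(2) ab(2) cN[OF p1(3)] p1(4) False])
  next
    case a1j: True
    show False
    proof (cases "[a2 = a] (mod p i ^ e)")
      case False
      show False by (rule cr[OF p2(1) ab(1) p2(2) ab(2) cN[OF p2(3)] False p2(4)])
    next
      case a2i: True
      have c12: "[a1 + b1 = a2 + b2] (mod N)"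
        using p1(3) p2(3) cong_sym cong_trans by metis
      have n1: "\<not> [a1 = a2] (mod p i ^ e)"
      proof
        assume "[a1 = a2] (mod p i ^ e)"
        then have "[a1 = a] (mod p i ^ e)" using a2i cong_trans by blast
        then show False using p1(4) by blast
      qed
      have n2: "\<not> [a1 = a2] (mod p j ^ f)"
      proof
        assume "[a1 = a2] (mod p j ^ f)"
        then have "[a2 = a] (mod p j ^ f)" using a1j cong_sym cong_trans by metis
        then show False using p2(4) by blast
      qed
      show False by (rule cr[OF p1(1) p2(1) p1(2) p2(2) cN[OF c12] n1 n2])
    qed
  qed
qed


end
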